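(* Let $K\ge1$ and let $w_1,w_2,\dots$ be vectors in the probability simplex $\mathcal P_K=\{w\in[0,1]^K:\sum_kw^k=1\}$, with the first $K$ of them satisfying $\sum_{s=1}^Kw_s^k=1$ for every $k\in[K]$ (the burn-in rounds, in which each arm is played exactly once, so $n_K^k=1$ for all $k$). For $t>K$, suppose the arm played at round $t$ is \[ k_t=\mathrm{argmin}_{k\in[K]}\frac{n_{t-1}^k}{\sum_{s=1}^tw_s^k}, \] where $n_t^k$ denotes the number of times arm $k$ has been played up to and including round $t$ (so $n_t^{k_t}=n_{t-1}^{k_t}+1$ and $n_t^k=n_{t-1}^k$ for $k\ne k_t$). Then for all $t\ge K$ and all $k\in[K]$, \[ \sum_{s=1}^tw_s^k-(K-1)\le n_t^k\le\sum_{s=1}^tw_s^k+1. \]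
   Context: This is the tracking rule used within each phase of an arm-sampling algorithm: at each round a sampling distribution $w_t$ over the $K$ arms is produced, and the played arm is chosen by the displayed argmin rule (ties broken arbitrarily). *)

theory Defs
  imports Complex_Main
begin

text \<open>Arms are 0,...,K-1, rounds are 1,2,...; play t is the arm played at round t.
  plays play t k = number of rounds s in {1..t} with play s = k  (n_t^k).
  cumw w t k = sum of w_s^k for s = 1..t.\<close>

definition plays :: "(nat \<Rightarrow> nat) \<Rightarrow> nat \<Rightarrow> nat \<Rightarrow> nat" where
  "plays play t k = card {s \<in> {1..t}. play s = k}"

definition cumw :: "(nat \<Rightarrow> nat \<Rightarrow> real) \<Rightarrow> nat \<Rightarrow> nat \<Rightarrow> real" where
  "cumw w t k = (\<Sum>s=1..t. w s k)"

end

theory Submission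
  imports Defs
begin

lemma plays_sum: "real (plays play t k) = (\<Sum>s=1..t. if play s = k then 1 else 0)"
  unfolding plays_def by (simp add: sum.If_cases Int_def conj_commute)

lemma plays_Suc: "real (plays play (Suc t) k) = real (plays play t k) + (if play (Suc t) = k then 1 else 0)"
  unfolding plays_sum by (simp add: sum.cl_ivl_Suc)

lemma cumw_Suc: "cumw w (Suc t) k = cumw w t k + w (Suc t) k"
  unfolding cumw_def by (simp add: sum.cl_ivl_Suc)

theorem lemma3:
  fixes K :: nat and w :: "nat \<Rightarrow> nat \<Rightarrow> real" and play :: "nat \<Rightarrow> nat"
  assumes K_pos: "K \<ge> 1"
    and simplex: "\<And>s. s \<ge> 1 \<Longrightarrow> (\<forall>k<K. 0 \<le> w s k \<and> w s k \<le> 1) \<and> (\<Sum>k<K. w s k) = 1"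
    and burnin_w: "\<And>k. k < K \<Longrightarrow> (\<Sum>s=1..K. w s k) = 1"
    and burnin_play: "bij_betw play {1..K} {..<K}"
    and argmin: "\<And>t. t > K \<Longrightarrow> play t < K \<and>
       (\<forall>j<K. real (plays play (t - 1) (play t)) / cumw w t (play t)
               \<le> real (plays play (t - 1) j) / cumw w t j)"
  shows "\<forall>t\<ge>K. \<forall>k<K. cumw w t k - (real K - 1) \<le> real (plays play t k)
                      \<and> real (plays play t k) \<le> cumw w t k + 1"
proof -
  have playlt: "play s < K" if "s \<ge> 1" for s
  proof (cases "s \<le> K")
    case True
    then show ?thesis using burnin_play that unfolding bij_betw_def by auto
  next
    case False
    then show ?thesis using argmin by auto
  qed
  have sumplays: "(\<Sum>k<K. real (plays play t k)) = real t" for t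
  proof -
    have "(\<Sum>k<K. real (plays play t k)) = (\<Sum>s=1..t. \<Sum>k<K. if play s = k then 1 else (0::real))"
      unfolding plays_sum by (rule sum.swap)
    also have "\<dots> = (\<Sum>s=1..t. 1)"
      by (rule sum.cong) (auto simp: playlt)
    finally show ?thesis by simp
  qed
  have sumcumw: "(\<Sum>k<K. cumw w t k) = real t" for t
  proof -
    have "(\<Sum>k<K. cumw w t k) = (\<Sum>s=1..t. \<Sum>k<K. w s k)"
      unfolding cumw_def by (rule sum.swap)
    also have "\<dots> = (\<Sum>s=1..t. 1)"
      by (rule sum.cong) (auto simp: simplex)
    finally show ?thesis by simp
  qed
  have cumge: "cumw w t k \<ge> 1" if "t \<ge> K" "k < K" for t k
    using that(1)
  proof (induction t rule: dec_induct)
    case base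
    then show ?case using burnin_w[OF \<open>k<K\<close>] by (simp add: cumw_def)
  next
    case (step n)
    have "w (Suc n) k \<ge> 0" using simplex[of "Suc n"] \<open>k<K\<close> by auto
    then show ?case using step by (simp add: cumw_Suc)
  qed
  have plK: "real (plays play K k) = 1" if "k < K" for k
  proof -
    have "k \<in> play ` {1..K}" using burnin_play that unfolding bij_betw_def by auto
    then obtain s where s: "s \<in> {1..K}" "play s = k" by blast
    have inj: "inj_on play {1..K}" using burnin_play unfolding bij_betw_def by blast
    have "{s' \<in> {1..K}. play s' = k} = {s}"
      using s inj unfolding inj_on_def by blast
    then show ?thesis unfolding plays_def by simp
  qed
  have upper: "\<forall>k<K. real (plays play t k) \<le> cumw w t k + 1" if "t \<ge> K" for t
    using that
  proof (induction t rule: dec_induct)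
    case base
    show ?case
    proof (intro allI impI)
      fix k assume "k < K"
      then show "real (plays play K k) \<le> cumw w K k + 1" using plK[of k] cumge[of K k] by simp
    qed
  next
    case (step n)
    define p where "p = play (Suc n)"
    have pK: "p < K" and am: "\<forall>j<K. real (plays play n p) / cumw w (Suc n) p
               \<le> real (plays play n j) / cumw w (Suc n) j"
      using argmin[of "Suc n"] step(1) unfolding p_def by auto
    have pos: "cumw w (Suc n) j > 0" if "j < K" for j
      using cumge[of "Suc n" j] that step(1) by auto
    have "real (plays play n p) * cumw w (Suc n) j \<le> real (plays play n j) * cumw w (Suc n) p"
      if "j < K" for j
      using am[rule_format, OF that] pos[OF that] pos[OF pK]
      by (simp add: divide_simps mult.commute)
    then have "(\<Sum>j<K. real (plays play n p) * cumw w (Suc n) j)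
        \<le> (\<Sum>j<K. real (plays play n j) * cumw w (Suc n) p)"
      by (intro sum_mono) auto
    then have "real (plays play n p) * real (Suc n) \<le> real n * cumw w (Suc n) p"
      by (simp add: sum_distrib_left[symmetric] sum_distrib_right[symmetric] sumcumw sumplays mult.commute)
    then have "real (plays play n p) * real (Suc n) \<le> real (Suc n) * cumw w (Suc n) p"
      using pos[OF pK] by (smt (verit) of_nat_Suc mult_right_mono of_nat_0_le_iff)
    then have keyp: "real (plays play n p) \<le> cumw w (Suc n) p"
      by (simp add: mult.commute)
    show ?case
    proof (intro allI impI)
      fix k assume k: "k < K"
      have wnn: "w (Suc n) k \<ge> 0" using simplex[of "Suc n"] k by auto
      show "real (plays play (Suc n) k) \<le> cumw w (Suc n) k + 1"
      proof (cases "p = k")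
        case True
        then show ?thesis using keyp by (simp add: plays_Suc p_def[symmetric])
      next
        case False
        have "real (plays play n k) \<le> cumw w n k + 1" using step(3) k by blast
        then show ?thesis using False wnn
          by (simp add: plays_Suc cumw_Suc p_def[symmetric])
      qed
    qed
  qed
  show ?thesis
  proof (intro allI impI conjI)
    fix t k assume t: "t \<ge> K" and k: "k < K"
    show "real (plays play t k) \<le> cumw w t k + 1" using upper t k by auto
    have "real t = real (plays play t k) + (\<Sum>j\<in>{..<K}-{k}. real (plays play t j))"
      using sumplays[of t] k by (simp add: sum.remove)
    also have "\<dots> \<le> real (plays play t k) + (\<Sum>j\<in>{..<K}-{k}. cumw w t j + 1)"
      using upper[OF t] by (intro add_left_mono sum_mono) auto
    also have "\<dots> = real (plays play t k) + (\<Sum>j\<in>{..<K}-{k}. cumw w t j) + (real K - 1)"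
      using k by (simp add: sum.distrib)
    finally have A: "real t \<le> real (plays play t k) + (\<Sum>j\<in>{..<K}-{k}. cumw w t j) + (real K - 1)" .
    have "real t = cumw w t k + (\<Sum>j\<in>{..<K}-{k}. cumw w t j)"
      using sumcumw[of t] k by (simp add: sum.remove)
    with A show "cumw w t k - (real K - 1) \<le> real (plays play t k)" by linarith
  qed
qed

end
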